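(* Suppose $\alpha\ge\beta$. Let $(n^{-*},n^{+*})$ be a global optimum of $\max\{\Phi_{w_{\min}}(n^-,n^+): n^-,n^+\in\mathbb{N}\cup\{0\},\ n^-+n^+=N\}$ and suppose the optimal value is positive. Then every global optimum $(w^{-*},w^{+*})$ of $P_{w_{\min}}(n^{-*},n^{+*})$ satisfies $w^{-*}_i=w_{\min}$ for all $i\in\{1,\dots,n^{-*}\}$.
   Context: Lottery with $N\in\mathbb{N}$ tickets, each outcome having probability $1/N$, and a fixed ticket price $-w_{\min}>0$. Parameters $\alpha,\beta\in(0,1)$, $\lambda>0$; value function $U(x)=x^\alpha$ for $x\ge0$, $U(x)=-\lambda(-x)^\beta$ for $x<0$. A function $f:[0,1]\to\mathbb{R}$ is inverse S-shaped if it is strictly increasing, continuously differentiable, and there is $x_0\in[0,1]$ such that $f'$ is strictly decreasing on $[0,x_0]$ and strictly increasing on $[x_0,1]$; $W^+,W^-:[0,1]\to[0,1]$ are inverse S-shaped with value $0$ at $0$ and $1$ at $1$. For $n^-+n^+=N$ let $h^-_i=W^-(i/N)-W^-((i-1)/N)$ ($i\le n^-$), $h^+_j=W^+((n^+-j+1)/N)-W^+((n^+-j)/N)$ ($j\le n^+$). Problem $P_{w_{\min}}(n^-,n^+)$: maximize $\sum_{i=1}^{n^-}(-w^-_i)-\sum_{j=1}^{n^+}w^+_j$ subject to $\sum_ih^-_iU(w^-_i)+\sum_jh^+_jU(w^+_j)\ge0$, $0\le w^+_1\le\cdots\le w^+_{n^+}$, $w_{\min}\le w^-_1\le\cdots\le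 w^-_{n^-}\le0$; $\Phi_{w_{\min}}(n^-,n^+)$ is its optimal value (zero when $n^-=0$ or $n^+=0$). *)

theory Defs
  imports "HOL-Analysis.Analysis"
begin

definition U :: "real \<Rightarrow> real \<Rightarrow> real \<Rightarrow> real \<Rightarrow> real" where
  "U alpha beta lam x = (if x \<ge> 0 then x powr alpha else - lam * ((- x) powr beta))"

definition inverse_S_shaped :: "(real \<Rightarrow> real) \<Rightarrow> bool" where
  "inverse_S_shaped f \<longleftrightarrow>
     strict_mono_on {0..1} f \<and>
     (\<exists>f'. (\<forall>x\<in>{0..1}. (f has_real_derivative f' x) (at x within {0..1})) \<and>
           continuous_on {0..1} f' \<and>
           (\<exists>x0\<in>{0..1}.
              (\<forall>x y. x \<in> {0..x0} \<and> y \<in> {0..x0} \<and> x < y \<longrightarrow> f' y < f' x) \<and>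
              (\<forall>x y. x \<in> {x0..1} \<and> y \<in> {x0..1} \<and> x < y \<longrightarrow> f' x < f' y)))"

definition h_minus :: "(real \<Rightarrow> real) \<Rightarrow> nat \<Rightarrow> nat \<Rightarrow> real" where
  "h_minus Wm N i = Wm (real i / real N) - Wm ((real i - 1) / real N)"

definition h_plus :: "(real \<Rightarrow> real) \<Rightarrow> nat \<Rightarrow> nat \<Rightarrow> nat \<Rightarrow> real" where
  "h_plus Wp N np j = Wp ((real np - real j + 1) / real N) - Wp ((real np - real j) / real N)"

text \<open>Objective of P_wmin(n-,n+); vectors are functions on indices 1..n.\<close>
definition objective :: "nat \<Rightarrow> nat \<Rightarrow> (nat \<Rightarrow> real) \<Rightarrow> (nat \<Rightarrow> real) \<Rightarrow> real" where
  "objective nm np wm wp = (\<Sum>i=1..nm. - wm i) - (\<Sum>j=1..np. wp j)"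

definition feasible ::
  "real \<Rightarrow> real \<Rightarrow> real \<Rightarrow> (real \<Rightarrow> real) \<Rightarrow> (real \<Rightarrow> real) \<Rightarrow> nat \<Rightarrow> real
    \<Rightarrow> nat \<Rightarrow> nat \<Rightarrow> (nat \<Rightarrow> real) \<Rightarrow> (nat \<Rightarrow> real) \<Rightarrow> bool" where
  "feasible alpha beta lam Wm Wp N wmin nm np wm wp \<longleftrightarrow>
     (\<Sum>i=1..nm. h_minus Wm N i * U alpha beta lam (wm i))
       + (\<Sum>j=1..np. h_plus Wp N np j * U alpha beta lam (wp j)) \<ge> 0 \<and>
     (\<forall>j\<in>{1..np}. 0 \<le> wp j) \<and> (\<forall>j\<in>{1..<np}. wp j \<le> wp (j + 1)) \<and>
     (\<forall>i\<in>{1..nm}. wmin \<le> wm i \<and> wm i \<le> 0) \<and> (\<forall>i\<in>{1..<nm}. wm i \<le> wm (i + 1))"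

definition is_optimum ::
  "real \<Rightarrow> real \<Rightarrow> real \<Rightarrow> (real \<Rightarrow> real) \<Rightarrow> (real \<Rightarrow> real) \<Rightarrow> nat \<Rightarrow> real
    \<Rightarrow> nat \<Rightarrow> nat \<Rightarrow> (nat \<Rightarrow> real) \<Rightarrow> (nat \<Rightarrow> real) \<Rightarrow> bool" where
  "is_optimum alpha beta lam Wm Wp N wmin nm np wm wp \<longleftrightarrow>
     feasible alpha beta lam Wm Wp N wmin nm np wm wp \<and>
     (\<forall>vm vp. feasible alpha beta lam Wm Wp N wmin nm np vm vp \<longrightarrow>
        objective nm np vm vp \<le> objective nm np wm wp)"

definition Phi ::
  "real \<Rightarrow> real \<Rightarrow> real \<Rightarrow> (real \<Rightarrow> real) \<Rightarrow> (real \<Rightarrow> real) \<Rightarrow> nat \<Rightarrow> real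
    \<Rightarrow> nat \<Rightarrow> nat \<Rightarrow> real" where
  "Phi alpha beta lam Wm Wp N wmin nm np =
     (if nm = 0 \<or> np = 0 then 0
      else Sup {objective nm np wm wp | wm wp. feasible alpha beta lam Wm Wp N wmin nm np wm wp})"

end

theory Submission
  imports Defs "HOL-Analysis.Analysis"
begin


lemma U0: "U a b l 0 = 0" by (simp add: U_def)

lemma U_pos_scale: "x \<ge> 0 \<Longrightarrow> s \<ge> 0 \<Longrightarrow> U a b l (s*x) = s powr a * U a b l x"
  by (simp add: U_def powr_mult)

lemma U_neg_scale:
  assumes "x \<le> 0" "T > 0" shows "U a b l (T*x) = T powr b * U a b l x"
proof (cases "x = 0")
  case True then show ?thesis by (simp add: U_def)
next
  case False
  then have "x < 0" using assms by simp
  then have "T * x < 0" using assms by (simp add: mult_pos_neg)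
  then show ?thesis using \<open>x < 0\<close> assms
    by (simp add: U_def powr_mult[symmetric])
qed

lemma U_nonneg: "x \<ge> 0 \<Longrightarrow> U a b l x \<ge> 0" by (simp add: U_def)
lemma U_nonpos: "l \<ge> 0 \<Longrightarrow> x \<le> 0 \<Longrightarrow> U a b l x \<le> 0" by (simp add: U_def)
lemma U_neg: "l > 0 \<Longrightarrow> x < 0 \<Longrightarrow> U a b l x < 0" by (simp add: U_def)
lemma U_mono_pos: "a > 0 \<Longrightarrow> 0 \<le> x \<Longrightarrow> x \<le> y \<Longrightarrow> U a b l x \<le> U a b l y"
  by (simp add: U_def powr_mono2)

lemma hm_pos:
  assumes "inverse_S_shaped Wm" "1 \<le> i" "i \<le> N"
  shows "h_minus Wm N i > 0"
proof -
  have sm: "strict_mono_on {0..1} Wm" using assms(1) by (simp add: inverse_S_shaped_def)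
  have N: "real N > 0" using assms by simp
  have "(real i - 1) / real N < real i / real N" using N by (simp add: divide_strict_right_mono)
  moreover have "(real i - 1) / real N \<in> {0..1}" "real i / real N \<in> {0..1}"
    using assms N by auto
  ultimately have "Wm ((real i - 1) / real N) < Wm (real i / real N)"
    using sm by (simp add: strict_mono_onD)
  then show ?thesis by (simp add: h_minus_def)
qed

lemma hp_pos:
  assumes "inverse_S_shaped Wp" "1 \<le> j" "j \<le> np" "np \<le> N"
  shows "h_plus Wp N np j > 0"
proof -
  have sm: "strict_mono_on {0..1} Wp" using assms(1) by (simp add: inverse_S_shaped_def)
  have N: "real N > 0" using assms by simp
  have "(real np - real j) / real N < (real np - real j + 1) / real N" using N by (simp add: divide_strict_right_mono)
  moreover have "(real np - real j) / real N \<in> {0..1}" "(real np - real j + 1) / real N \<in> {0..1}"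
    using assms N by auto
  ultimately have "Wp ((real np - real j) / real N) < Wp ((real np - real j + 1) / real N)"
    using sm by (simp add: strict_mono_onD)
  then show ?thesis by (simp add: h_plus_def)
qed

lemma le_powr_self: "0 \<le> s \<Longrightarrow> s \<le> 1 \<Longrightarrow> a \<le> 1 \<Longrightarrow> (s::real) \<le> s powr a"
  using powr_mono'[of a 1 s] by simp

lemma chain_mono:
  fixes f :: "nat \<Rightarrow> real"
  assumes "\<forall>i\<in>{1..<n}. f i \<le> f (i+1)" "1 \<le> i" "i \<le> j" "j \<le> n"
  shows "f i \<le> f j"
  using assms(3,4)
proof (induction j)
  case 0 then show ?case using assms(2) by simp
next
  case (Suc j)
  show ?case
  proof (cases "i = Suc j")
    case True then show ?thesis by simp
  next
    case False
    then have "i \<le> j" using Suc by simp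
    then have "f i \<le> f j" using Suc by simp
    also have "f j \<le> f (Suc j)" using assms(1) Suc \<open>i \<le> j\<close> assms(2) by auto
    finally show ?thesis .
  qed
qed

lemma obj_bound:
  assumes "feasible a b l Wm Wp N wmin nm np vm vp"
  shows "objective nm np vm vp \<le> - (real nm * wmin)"
proof -
  have "(\<Sum>i=1..nm. - vm i) \<le> (\<Sum>i=1..nm. - wmin)"
    using assms by (intro sum_mono) (auto simp: feasible_def)
  moreover have "(\<Sum>j=1..np. vp j) \<ge> 0"
    using assms by (intro sum_nonneg) (auto simp: feasible_def)
  ultimately show ?thesis by (simp add: objective_def)
qed

lemma Phi_ge:
  assumes "nm \<noteq> 0" "np \<noteq> 0" "feasible a b l Wm Wp N wmin nm np vm vp"
  shows "objective nm np vm vp \<le> Phi a b l Wm Wp N wmin nm np"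
proof -
  have "bdd_above {objective nm np wm wp | wm wp. feasible a b l Wm Wp N wmin nm np wm wp}"
    by (rule bdd_aboveI[where M = "- (real nm * wmin)"]) (auto intro: obj_bound)
  then show ?thesis using assms unfolding Phi_def
    by (auto intro!: cSup_upper)
qed

lemma Phi_opt:
  assumes "nm \<noteq> 0" "np \<noteq> 0" "is_optimum a b l Wm Wp N wmin nm np vm vp"
  shows "Phi a b l Wm Wp N wmin nm np = objective nm np vm vp"
  using assms unfolding Phi_def is_optimum_def
  by (auto intro!: cSup_eq_maximum)



lemma improve:
  fixes a b l wmin :: real and N a' b' :: nat and Wm Wp :: "real \<Rightarrow> real" and z v :: "nat \<Rightarrow> real"
  assumes a: "0 < a" "a < 1" and l: "l > 0"
    and Wp_S: "inverse_S_shaped Wp"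
    and fe: "feasible a b l Wm Wp N wmin a' b' z v"
    and v1: "v 1 = 0" and b1: "b' \<ge> 1" and bN: "b' \<le> N"
    and L: "(\<Sum>i=1..a'. h_minus Wm N i * U a b l (z i)) < 0"
  shows "\<exists>v'. feasible a b l Wm Wp N wmin a' b' z v' \<and> objective a' b' z v' > objective a' b' z v"
proof -
  define L where "L = (\<Sum>i=1..a'. h_minus Wm N i * U a b l (z i))"
  define hp where "hp = h_plus Wp N b'"
  define G where "G = (\<Sum>j=1..b'. hp j * U a b l (v j))"
  define S where "S = (\<Sum>j=1..b'. v j)"
  have hp_nn: "\<And>j. j \<in> {1..b'} \<Longrightarrow> hp j > 0"
    using hp_pos[OF Wp_S] bN unfolding hp_def by auto
  have v_nn: "\<And>j. j \<in> {1..b'} \<Longrightarrow> v j \<ge> 0" using fe by (auto simp: feasible_def)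
  have v_mono: "\<And>j. j \<in> {1..<b'} \<Longrightarrow> v j \<le> v (j+1)" using fe by (auto simp: feasible_def)
  have LG: "L + G \<ge> 0" using fe unfolding feasible_def L_def G_def hp_def by simp
  have Lneg: "L < 0" using L unfolding L_def .
  have Gpos: "G > 0" using LG Lneg by simp
  have "\<exists>j\<in>{1..b'}. v j \<noteq> 0"
  proof (rule ccontr)
    assume "\<not> ?thesis"
    then have "G = 0" unfolding G_def by (simp add: U0)
    then show False using Gpos by simp
  qed
  then obtain j0 where j0: "j0 \<in> {1..b'}" "v j0 > 0" using v_nn by force
  have "v j0 \<le> S" unfolding S_def using j0 v_nn by (intro member_le_sum) auto
  then have Spos: "S > 0" using j0 by simp
  define h1 where "h1 = hp 1"
  have h1pos: "h1 > 0" unfolding h1_def using hp_nn b1 by auto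
  define c1 where "c1 = h1 * S / (real b' * G)"
  define c2 where "c2 = G / h1"
  have c1pos: "c1 > 0" unfolding c1_def using h1pos Spos Gpos b1 by simp
  have c2pos: "c2 > 0" unfolding c2_def using h1pos Gpos by simp
  define e where "e = min (c2 powr (1/a)) ((c1/2) powr (1/(1-a)))"
  have epos: "e > 0" unfolding e_def using c1pos c2pos by simp
  have e1: "e powr a \<le> c2"
  proof -
    have "e powr a \<le> (c2 powr (1/a)) powr a"
      using a epos unfolding e_def by (intro powr_mono2) auto
    also have "\<dots> = c2" using a c2pos by (simp add: powr_powr)
    finally show ?thesis .
  qed
  have e2: "e powr (1-a) < c1"
  proof -
    have "e powr (1-a) \<le> ((c1/2) powr (1/(1-a))) powr (1-a)"
      using a epos unfolding e_def by (intro powr_mono2) auto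
    also have "\<dots> = c1/2" using a c1pos by (simp add: powr_powr)
    finally show ?thesis using c1pos by simp
  qed
  define d where "d = h1 * e powr a / G"
  have dpos: "d > 0" unfolding d_def using h1pos epos Gpos by simp
  have d1: "d \<le> 1" unfolding d_def using e1 h1pos Gpos unfolding c2_def
    by (simp add: field_simps)
  define s where "s = 1 - d"
  have s01: "0 \<le> s" "s \<le> 1" unfolding s_def using dpos d1 by auto
  define v' where "v' = (\<lambda>j. max e (s * v j))"
  have pt: "hp j * U a b l (v' j) \<ge> (if j = 1 then h1 * e powr a else 0) + s * (hp j * U a b l (v j))"
    if j: "j \<in> {1..b'}" for j
  proof (cases "j = 1")
    case True
    then show ?thesis using v1 epos unfolding v'_def h1_def by (simp add: U0 U_def)
  next
    case False
    have "s * (hp j * U a b l (v j)) \<le> hp j * (s powr a * U a b l (v j))"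
    proof -
      have "s \<le> s powr a" using s01 a le_powr_self by simp
      moreover have "0 \<le> hp j * U a b l (v j)"
        using hp_nn[OF j] U_nonneg[OF v_nn[OF j]] by simp
      ultimately have "s * (hp j * U a b l (v j)) \<le> s powr a * (hp j * U a b l (v j))"
        by (rule mult_right_mono)
      then show ?thesis by (simp add: algebra_simps)
    qed
    also have "\<dots> = hp j * U a b l (s * v j)" using U_pos_scale v_nn[OF j] s01 by simp
    also have "\<dots> \<le> hp j * U a b l (v' j)"
      using hp_nn[OF j] v_nn[OF j] s01 a unfolding v'_def
      by (intro mult_left_mono U_mono_pos) auto
    finally show ?thesis using False by simp
  qed
  have "(\<Sum>j=1..b'. hp j * U a b l (v' j)) \<ge> (\<Sum>j=1..b'. (if j = 1 then h1 * e powr a else 0) + s * (hp j * U a b l (v j)))"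
    using pt by (intro sum_mono) auto
  also have "(\<Sum>j=1..b'. (if j = 1 then h1 * e powr a else 0) + s * (hp j * U a b l (v j))) = h1 * e powr a + s * G"
    using b1 unfolding G_def by (simp add: sum.distrib sum_distrib_left)
  finally have Gnew: "(\<Sum>j=1..b'. hp j * U a b l (v' j)) \<ge> h1 * e powr a + s * G" .
  have "L + (h1 * e powr a + s * G) = L + G" unfolding s_def d_def using Gpos by (simp add: field_simps)
  then have fe': "feasible a b l Wm Wp N wmin a' b' z v'"
    using fe Gnew LG unfolding feasible_def L_def hp_def
    apply (intro conjI)
    subgoal by simp
    subgoal using epos unfolding v'_def by auto
    subgoal
    proof (intro ballI)
      fix j assume "j \<in> {1..<b'}"
      then have "s * v j \<le> s * v (j+1)" using v_mono s01 by (simp add: mult_left_mono)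
      then show "v' j \<le> v' (j+1)" unfolding v'_def by simp
    qed
    subgoal by simp
    subgoal by simp
    done
  have "(\<Sum>j=1..b'. v' j) \<le> (\<Sum>j=1..b'. e + s * v j)"
    unfolding v'_def using epos v_nn s01 by (intro sum_mono) auto
  also have "\<dots> = real b' * e + s * S" unfolding S_def by (simp add: sum.distrib sum_distrib_left)
  also have "\<dots> < S"
  proof -
    have ee: "e = e powr a * e powr (1-a)" using epos by (simp add: powr_add[symmetric])
    have "real b' * e < real b' * (e powr a * c1)"
      using e2 b1 epos by (subst ee) (simp add: mult_strict_left_mono)
    also have "\<dots> = d * S" unfolding c1_def d_def using b1 Gpos by (simp add: field_simps)
    finally show ?thesis unfolding s_def by (simp add: algebra_simps)
  qed
  finally have "objective a' b' z v' > objective a' b' z v"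
    unfolding objective_def S_def by simp
  then show ?thesis using fe' by blast
qed



lemma hplus_shift: "h_plus Wp N (Suc b) (Suc i) = h_plus Wp N b i"
  by (simp add: h_plus_def)

lemma transfer:
  fixes z g :: "nat \<Rightarrow> real"
  assumes fe: "feasible a b l Wm Wp N wmin (Suc m) bb z g"
    and m1: "m \<ge> 1" and zl: "z (Suc m) = 0"
  defines "g2 \<equiv> (\<lambda>j. if j = 1 then 0 else g (j - 1))"
  shows "feasible a b l Wm Wp N wmin m (Suc bb) z g2"
    and "objective m (Suc bb) z g2 = objective (Suc m) bb z g"
    and "(\<Sum>i=1..m. h_minus Wm N i * U a b l (z i)) = (\<Sum>i=1..Suc m. h_minus Wm N i * U a b l (z i))"
    and "g2 1 = 0"
proof -
  show L: "(\<Sum>i=1..m. h_minus Wm N i * U a b l (z i)) = (\<Sum>i=1..Suc m. h_minus Wm N i * U a b l (z i))"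
    using zl by (simp add: U0)
  have G: "(\<Sum>j=1..Suc bb. h_plus Wp N (Suc bb) j * U a b l (g2 j)) = (\<Sum>j=1..bb. h_plus Wp N bb j * U a b l (g j))"
  proof -
    have "(\<Sum>j=1..Suc bb. h_plus Wp N (Suc bb) j * U a b l (g2 j))
        = h_plus Wp N (Suc bb) 1 * U a b l (g2 1) + (\<Sum>j=Suc 1..Suc bb. h_plus Wp N (Suc bb) j * U a b l (g2 j))"
      by (rule sum.atLeast_Suc_atMost) simp
    also have "(\<Sum>j=Suc 1..Suc bb. h_plus Wp N (Suc bb) j * U a b l (g2 j)) = (\<Sum>j=1..bb. h_plus Wp N (Suc bb) (Suc j) * U a b l (g2 (Suc j)))"
      by (rule sum.shift_bounds_cl_Suc_ivl)
    finally show ?thesis unfolding g2_def by (simp add: U0 hplus_shift)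
  qed
  have S: "(\<Sum>j=1..Suc bb. g2 j) = (\<Sum>j=1..bb. g j)"
  proof -
    have "(\<Sum>j=1..Suc bb. g2 j) = g2 1 + (\<Sum>j=Suc 1..Suc bb. g2 j)"
      by (rule sum.atLeast_Suc_atMost) simp
    also have "(\<Sum>j=Suc 1..Suc bb. g2 j) = (\<Sum>j=1..bb. g2 (Suc j))"
      by (rule sum.shift_bounds_cl_Suc_ivl)
    finally show ?thesis unfolding g2_def by simp
  qed
  have Z: "(\<Sum>i=1..m. - z i) = (\<Sum>i=1..Suc m. - z i)" using zl by simp
  show "objective m (Suc bb) z g2 = objective (Suc m) bb z g"
    unfolding objective_def using S Z by simp
  show "g2 1 = 0" unfolding g2_def by simp
  show "feasible a b l Wm Wp N wmin m (Suc bb) z g2"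
    unfolding feasible_def
  proof (intro conjI)
    show "0 \<le> (\<Sum>i=1..m. h_minus Wm N i * U a b l (z i)) + (\<Sum>j=1..Suc bb. h_plus Wp N (Suc bb) j * U a b l (g2 j))"
    proof -
      have "0 \<le> (\<Sum>i=1..Suc m. h_minus Wm N i * U a b l (z i)) + (\<Sum>j=1..bb. h_plus Wp N bb j * U a b l (g j))"
        using fe unfolding feasible_def by blast
      then show ?thesis by (simp only: L G)
    qed
    show "\<forall>j\<in>{1..Suc bb}. 0 \<le> g2 j"
    proof
      fix j assume j: "j \<in> {1..Suc bb}"
      have "\<forall>j\<in>{1..bb}. 0 \<le> g j" using fe unfolding feasible_def by blast
      moreover have "j \<noteq> 1 \<Longrightarrow> j - 1 \<in> {1..bb}" using j by auto
      ultimately show "0 \<le> g2 j" unfolding g2_def by auto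
    qed
    show "\<forall>j\<in>{1..<Suc bb}. g2 j \<le> g2 (j + 1)"
    proof
      fix j assume j: "j \<in> {1..<Suc bb}"
      show "g2 j \<le> g2 (j + 1)"
      proof (cases "j = 1")
        case True
        then show ?thesis using fe j unfolding feasible_def g2_def by auto
      next
        case False
        then have "j - 1 \<in> {1..<bb}" "j - 1 + 1 = j" using j by auto
        moreover have "\<forall>j\<in>{1..<bb}. g j \<le> g (j + 1)" using fe unfolding feasible_def by blast
        ultimately have "g (j - 1) \<le> g j" by metis
        moreover have "j + 1 \<noteq> 1" using j by simp
        ultimately show ?thesis using False j unfolding g2_def by simp
      qed
    qed
    show "\<forall>i\<in>{1..m}. wmin \<le> z i \<and> z i \<le> 0" using fe unfolding feasible_def by auto
    show "\<forall>i\<in>{1..<m}. z i \<le> z (i + 1)" using fe unfolding feasible_def by auto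
  qed
qed



lemma powr_concave:
  assumes "0 < a" "a < 1"
  shows "concave_on {0<..} (\<lambda>x::real. x powr a)"
proof (rule f''_le0_imp_concave[where f' = "\<lambda>x. a * x powr (a - 1)" and f'' = "\<lambda>x. a * ((a - 1) * x powr (a - 1 - 1))"])
  show "convex ({0<..} :: real set)" by simp
  fix x :: real assume "x \<in> {0<..}"
  then have x: "x > 0" by simp
  show "DERIV (\<lambda>x. x powr a) x :> a * x powr (a - 1)"
    using x by (auto intro!: derivative_eq_intros)
  show "DERIV (\<lambda>x. a * x powr (a - 1)) x :> a * ((a - 1) * x powr (a - 1 - 1))"
    using x by (auto intro!: derivative_eq_intros)
  show "a * ((a - 1) * x powr (a - 1 - 1)) \<le> 0"
  proof -
    have "(a - 1) * x powr (a - 1 - 1) \<le> 0" using assms x by (intro mult_nonpos_nonneg) auto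
    moreover have "0 \<le> a" using assms by simp
    ultimately show ?thesis by (rule mult_nonneg_nonpos[rotated])
  qed
qed

lemma concave_ineq:
  fixes u T a :: real
  assumes "0 < a" "a < 1" "0 \<le> u" "u \<le> 1" "T \<ge> 1"
  shows "u + (1 - u) * T powr a \<le> (u + (1 - u) * T) powr a"
proof -
  have "(1 - (1-u)) * 1 powr a + (1-u) * T powr a \<le> ((1 - (1-u)) *\<^sub>R 1 + (1-u) *\<^sub>R T) powr a"
    using concave_onD[OF powr_concave[OF assms(1,2)], of "1-u" 1 T] assms by auto
  then show ?thesis by simp
qed

lemma key_chain:
  fixes u T p alpha beta :: real
  assumes "0 < alpha" "alpha < 1" "0 < beta" "beta \<le> alpha" "0 \<le> u" "u \<le> 1" "T \<ge> 1"
    and "u powr alpha = p"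
  shows "p + T powr beta * (1 - p) \<le> (T - (T - 1) * u) powr alpha"
proof -
  have p1: "p \<le> 1"
  proof -
    have "u powr alpha \<le> 1 powr alpha" using assms by (intro powr_mono2) auto
    then show ?thesis using assms by simp
  qed
  have "T powr beta \<le> T powr alpha" using assms by (intro powr_mono) auto
  then have "p + T powr beta * (1 - p) \<le> p + T powr alpha * (1 - p)"
    using p1 by (intro add_left_mono mult_right_mono) auto
  also have "\<dots> \<le> u + T powr alpha * (1 - u)"
  proof -
    have "u \<le> p" using le_powr_self[of u alpha] assms by simp
    moreover have "T powr alpha \<ge> 1" using assms by (intro ge_one_powr_ge_zero) auto
    ultimately have "(p - u) * (1 - T powr alpha) \<le> 0"
      by (intro mult_nonneg_nonpos) auto
    then show ?thesis by (simp add: algebra_simps)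
  qed
  also have "\<dots> \<le> (u + (1 - u) * T) powr alpha"
    using concave_ineq[of alpha u T] assms by (simp add: algebra_simps)
  also have "u + (1 - u) * T = T - (T - 1) * u" by (simp add: algebra_simps)
  finally show ?thesis .
qed

lemma sum_neg_of_one:
  fixes f :: "nat \<Rightarrow> real"
  assumes "finite S" "i \<in> S" "f i < 0" "\<And>j. j \<in> S \<Longrightarrow> f j \<le> 0"
  shows "sum f S < 0"
proof -
  have "sum f S = f i + sum f (S - {i})" using assms by (simp add: sum.remove)
  moreover have "sum f (S - {i}) \<le> 0" using assms by (intro sum_nonpos) auto
  ultimately show ?thesis using assms by simp
qed



theorem proposition5:
  fixes alpha beta lam wmin :: real and N :: nat and Wm Wp :: "real \<Rightarrow> real"
    and nm_opt np_opt :: nat and wm wp :: "nat \<Rightarrow> real"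
  assumes N_pos: "N \<ge> 1"
    and price: "- wmin > 0"
    and alpha_bd: "0 < alpha" "alpha < 1"
    and beta_bd: "0 < beta" "beta < 1"
    and lam_pos: "lam > 0"
    and alpha_ge_beta: "alpha \<ge> beta"
    and Wp_S: "inverse_S_shaped Wp" and Wp_range: "\<forall>x\<in>{0..1}. Wp x \<in> {0..1}"
    and Wp0: "Wp 0 = 0" and Wp1: "Wp 1 = 1"
    and Wm_S: "inverse_S_shaped Wm" and Wm_range: "\<forall>x\<in>{0..1}. Wm x \<in> {0..1}"
    and Wm0: "Wm 0 = 0" and Wm1: "Wm 1 = 1"
    and n_sum: "nm_opt + np_opt = N"
    and n_opt: "\<forall>nm np. nm + np = N \<longrightarrow>
                  Phi alpha beta lam Wm Wp N wmin nm np \<le> Phi alpha beta lam Wm Wp N wmin nm_opt np_opt"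
    and pos: "Phi alpha beta lam Wm Wp N wmin nm_opt np_opt > 0"
    and w_opt: "is_optimum alpha beta lam Wm Wp N wmin nm_opt np_opt wm wp"
  shows "\<forall>i\<in>{1..nm_opt}. wm i = wmin"
proof (rule ccontr)
  assume "\<not> (\<forall>i\<in>{1..nm_opt}. wm i = wmin)"
  then obtain i0 where i0: "i0 \<in> {1..nm_opt}" "wm i0 \<noteq> wmin" by blast
  let ?U = "U alpha beta lam"
  define a where "a = nm_opt"
  define b where "b = np_opt"
  have a0: "a \<noteq> 0" "b \<noteq> 0" using pos unfolding a_def b_def by (auto simp: Phi_def split: if_splits)
  define Ob where "Ob = objective a b wm wp"
  have PhiO: "Phi alpha beta lam Wm Wp N wmin a b = Ob"
    using Phi_opt[OF a0 w_opt[folded a_def b_def]] unfolding Ob_def .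
  have Opos: "Ob > 0" using pos PhiO unfolding a_def b_def by simp
  have fe: "feasible alpha beta lam Wm Wp N wmin a b wm wp"
    using w_opt unfolding a_def b_def is_optimum_def by blast
  have opt: "\<And>vm vp. feasible alpha beta lam Wm Wp N wmin a b vm vp \<Longrightarrow> objective a b vm vp \<le> Ob"
    using w_opt unfolding a_def b_def Ob_def is_optimum_def by blast
  have wm_rng: "\<And>i. i \<in> {1..a} \<Longrightarrow> wmin \<le> wm i \<and> wm i \<le> 0" using fe unfolding feasible_def by blast
  have wm_ord: "\<forall>i\<in>{1..<a}. wm i \<le> wm (i+1)" using fe unfolding feasible_def by blast
  have wp_nn: "\<And>j. j \<in> {1..b} \<Longrightarrow> 0 \<le> wp j" using fe unfolding feasible_def by blast
  have wp_ord: "\<And>j. j \<in> {1..<b} \<Longrightarrow> wp j \<le> wp (j+1)" using fe unfolding feasible_def by blast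
  have aN: "a + b = N" using n_sum unfolding a_def b_def .
  define hm where "hm = h_minus Wm N"
  define hp where "hp = h_plus Wp N b"
  have hm_p: "\<And>i. i \<in> {1..a} \<Longrightarrow> hm i > 0" unfolding hm_def using hm_pos[OF Wm_S] aN by auto
  have hp_p: "\<And>j. j \<in> {1..b} \<Longrightarrow> hp j > 0" unfolding hp_def using hp_pos[OF Wp_S] aN by auto
  define kp where "kp = (\<lambda>i. if wm i = wmin then wmin else 0)"
  define mp where "mp = (\<lambda>i. if wm i = wmin then 0 else wm i)"
  define KU where "KU = (\<Sum>i=1..a. hm i * ?U (kp i))"
  define MU where "MU = (\<Sum>i=1..a. hm i * ?U (mp i))"
  define G where "G = (\<Sum>j=1..b. hp j * ?U (wp j))"
  define A where "A = (\<Sum>i=1..a. - kp i)"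
  define Om where "Om = (\<Sum>i=1..a. - mp i)"
  define Og where "Og = (\<Sum>j=1..b. wp j)"
  have kp_rng: "\<And>i. wmin \<le> kp i \<and> kp i \<le> 0" unfolding kp_def using price by auto
  have mp_rng: "\<And>i. i \<in> {1..a} \<Longrightarrow> mp i \<le> 0" unfolding mp_def using wm_rng by auto
  have cons0: "0 \<le> (\<Sum>i=1..a. hm i * ?U (wm i)) + G"
    using fe unfolding feasible_def hm_def G_def hp_def by blast
  have "(\<Sum>i=1..a. hm i * ?U (wm i)) = (\<Sum>i=1..a. hm i * ?U (kp i) + hm i * ?U (mp i))"
    by (rule sum.cong) (auto simp: kp_def mp_def U0)
  then have cons: "KU + MU + G \<ge> 0" using cons0 unfolding KU_def MU_def by (simp add: sum.distrib)
  have KU_np: "KU \<le> 0" unfolding KU_def using hm_p kp_rng lam_pos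
    by (intro sum_nonpos mult_nonneg_nonpos U_nonpos) (auto intro: less_imp_le)
  have MU_np: "MU \<le> 0" unfolding MU_def using hm_p mp_rng lam_pos
    by (intro sum_nonpos mult_nonneg_nonpos U_nonpos) (auto intro: less_imp_le)
  have G_nn: "G \<ge> 0" unfolding G_def using hp_p wp_nn
    by (intro sum_nonneg mult_nonneg_nonneg U_nonneg) (auto intro: less_imp_le)
  have "(\<Sum>i=1..a. - wm i) = (\<Sum>i=1..a. - kp i + - mp i)"
    by (rule sum.cong) (auto simp: kp_def mp_def)
  also have "\<dots> = A + Om" unfolding A_def Om_def by (simp only: sum.distrib)
  finally have O_eq: "Ob = A + Om - Og" unfolding Ob_def objective_def Og_def by simp
  define M where "M = {i\<in>{1..a}. wm i \<noteq> wmin}"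
  have M_fin: "finite M" unfolding M_def by simp
  have M_ne: "M \<noteq> {}" using i0 unfolding M_def a_def by auto
  define D where "D = Min ((\<lambda>i. wm i - wmin) ` M)"
  have D_pos: "D > 0"
  proof -
    have "D \<in> (\<lambda>i. wm i - wmin) ` M" unfolding D_def using M_fin M_ne by (intro Min_in) auto
    then obtain i where "i \<in> M" "D = wm i - wmin" by blast
    then show ?thesis using wm_rng unfolding M_def by force
  qed
  have D_le: "\<And>i. i \<in> M \<Longrightarrow> D \<le> wm i - wmin" unfolding D_def using M_fin by (intro Min_le) auto
  define T where "T = 1 + D / (- wmin)"
  have T1: "T > 1" unfolding T_def using D_pos price by (simp add: divide_pos_neg)
  have TM: "wmin \<le> T * wm i" if i: "i \<in> M" for i
  proof -
    have r: "wmin \<le> wm i" using i wm_rng unfolding M_def by auto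
    have "wm i / (- wmin) \<ge> -1" using r price by (simp add: field_simps)
    then have "D * (wm i / (- wmin)) \<ge> D * (-1)" using D_pos by (intro mult_left_mono) auto
    then have "T * wm i \<ge> wm i - D" unfolding T_def by (simp add: algebra_simps)
    then show ?thesis using D_le[OF i] by simp
  qed
  define p where "p = (if G = 0 then 0 else - KU / G)"
  have G0: "G = 0 \<Longrightarrow> KU = 0 \<and> MU = 0" using cons KU_np MU_np by simp
  have p01: "0 \<le> p" "p \<le> 1" unfolding p_def using KU_np MU_np G_nn cons by (auto simp: field_simps)
  define u where "u = p powr (1 / alpha)"
  have u01: "0 \<le> u" "u \<le> 1"
  proof -
    show "0 \<le> u" unfolding u_def by simp
    have "p powr (1/alpha) \<le> 1 powr (1/alpha)" using p01 alpha_bd by (intro powr_mono2) auto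
    then show "u \<le> 1" unfolding u_def by simp
  qed
  have up: "u powr alpha = p"
  proof (cases "p = 0")
    case True then show ?thesis unfolding u_def by simp
  next
    case False then show ?thesis unfolding u_def using p01 alpha_bd by (simp add: powr_powr)
  qed
  define sg where "sg = T - (T - 1) * u"
  have sg1: "sg \<ge> 1"
  proof -
    have "(T - 1) * (1 - u) \<ge> 0" using u01 T1 by (intro mult_nonneg_nonneg) auto
    then show ?thesis unfolding sg_def by (simp add: algebra_simps)
  qed
  have kp_ord: "\<forall>i\<in>{1..<a}. kp i \<le> kp (i+1)"
  proof
    fix i assume i: "i \<in> {1..<a}"
    show "kp i \<le> kp (i+1)"
    proof (cases "wm (i+1) = wmin")
      case True
      then have "wm i \<le> wmin" using wm_ord i by auto
      then have "wm i = wmin" using wm_rng i by force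
      then show ?thesis using True unfolding kp_def by simp
    next
      case False then show ?thesis using kp_rng unfolding kp_def by simp
    qed
  qed
  have gsum: "(\<Sum>j=1..b. hp j * ?U (c * wp j)) = c powr alpha * G" if "c \<ge> 0" for c
    unfolding G_def sum_distrib_left
    by (rule sum.cong) (use that wp_nn U_pos_scale in auto)
  have feas_scaled: "feasible alpha beta lam Wm Wp N wmin a b vm (\<lambda>j. c * wp j)"
    if c: "c \<ge> 0" and vr: "\<forall>i\<in>{1..a}. wmin \<le> vm i \<and> vm i \<le> 0"
      and vo: "\<forall>i\<in>{1..<a}. vm i \<le> vm (i+1)"
      and vc: "(\<Sum>i=1..a. hm i * ?U (vm i)) + c powr alpha * G \<ge> 0" for c vm
    unfolding feasible_def
  proof (intro conjI)
    show "0 \<le> (\<Sum>i=1..a. h_minus Wm N i * ?U (vm i)) + (\<Sum>j=1..b. h_plus Wp N b j * ?U (c * wp j))"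
      using vc gsum[OF c] unfolding hm_def hp_def by simp
    show "\<forall>j\<in>{1..b}. 0 \<le> c * wp j" using c wp_nn by auto
    show "\<forall>j\<in>{1..<b}. c * wp j \<le> c * wp (j + 1)" using c wp_ord by (auto intro: mult_left_mono)
  qed (use vr vo in auto)
  have fe0: "feasible alpha beta lam Wm Wp N wmin a b kp (\<lambda>j. u * wp j)"
  proof (rule feas_scaled)
    show "0 \<le> u" using u01 by simp
    show "\<forall>i\<in>{1..a}. wmin \<le> kp i \<and> kp i \<le> 0" using kp_rng by auto
    show "\<forall>i\<in>{1..<a}. kp i \<le> kp (i+1)" using kp_ord .
    show "0 \<le> (\<Sum>i=1..a. hm i * ?U (kp i)) + u powr alpha * G"
      using G0 unfolding KU_def[symmetric] up p_def by (cases "G = 0") auto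
  qed
  define O0 where "O0 = objective a b kp (\<lambda>j. u * wp j)"
  have O0_eq: "O0 = A - u * Og" unfolding O0_def objective_def A_def Og_def by (simp add: sum_distrib_left)
  have O0_le: "O0 \<le> Ob" unfolding O0_def using opt[OF fe0] .
  define wT where "wT = (\<lambda>i. if wm i = wmin then wmin else T * wm i)"
  have wT_rng: "\<forall>i\<in>{1..a}. wmin \<le> wT i \<and> wT i \<le> 0"
  proof
    fix i assume i: "i \<in> {1..a}"
    show "wmin \<le> wT i \<and> wT i \<le> 0"
    proof (cases "wm i = wmin")
      case True then show ?thesis unfolding wT_def using price by simp
    next
      case False
      then have "i \<in> M" using i unfolding M_def by simp
      then show ?thesis unfolding wT_def using False TM wm_rng[OF i] T1
        by (simp add: mult_nonneg_nonpos)
    qed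
  qed
  have wT_ord: "\<forall>i\<in>{1..<a}. wT i \<le> wT (i+1)"
  proof
    fix i assume i: "i \<in> {1..<a}"
    have le: "wm i \<le> wm (i+1)" using wm_ord i by auto
    show "wT i \<le> wT (i+1)"
    proof (cases "wm (i+1) = wmin")
      case True
      then have "wm i \<le> wmin" using le by simp
      then have "wm i = wmin" using wm_rng i by force
      then show ?thesis using True unfolding wT_def by simp
    next
      case False
      then have iM: "i + 1 \<in> M" using i unfolding M_def by auto
      show ?thesis
      proof (cases "wm i = wmin")
        case True then show ?thesis using False TM[OF iM] unfolding wT_def by simp
      next
        case False2: False
        then show ?thesis using False le T1 unfolding wT_def by simp
      qed
    qed
  qed
  have lossT: "(\<Sum>i=1..a. hm i * ?U (wT i)) = KU + T powr beta * MU"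
  proof -
    have "(\<Sum>i=1..a. hm i * ?U (wT i)) = (\<Sum>i=1..a. hm i * ?U (kp i) + T powr beta * (hm i * ?U (mp i)))"
    proof (rule sum.cong)
      fix i assume i: "i \<in> {1..a}"
      show "hm i * ?U (wT i) = hm i * ?U (kp i) + T powr beta * (hm i * ?U (mp i))"
      proof (cases "wm i = wmin")
        case True then show ?thesis unfolding wT_def kp_def mp_def by (simp add: U0)
      next
        case False
        have "?U (T * wm i) = T powr beta * ?U (wm i)"
          using U_neg_scale wm_rng[OF i] T1 by simp
        then show ?thesis using False unfolding wT_def kp_def mp_def by (simp add: U0)
      qed
    qed simp
    then show ?thesis unfolding KU_def MU_def by (simp add: sum.distrib sum_distrib_left)
  qed
  have feT: "feasible alpha beta lam Wm Wp N wmin a b wT (\<lambda>j. sg * wp j)"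
  proof (rule feas_scaled)
    show "0 \<le> sg" using sg1 by simp
    show "\<forall>i\<in>{1..a}. wmin \<le> wT i \<and> wT i \<le> 0" using wT_rng .
    show "\<forall>i\<in>{1..<a}. wT i \<le> wT (i+1)" using wT_ord .
    show "0 \<le> (\<Sum>i=1..a. hm i * ?U (wT i)) + sg powr alpha * G"
      unfolding lossT
    proof (cases "G = 0")
      case True then show "0 \<le> KU + T powr beta * MU + sg powr alpha * G" using G0 by simp
    next
      case False
      then have Gp: "G > 0" using G_nn by simp
      have KUe: "KU = - p * G" unfolding p_def using False by simp
      have "MU \<ge> - (1 - p) * G" using cons KUe by (simp add: algebra_simps)
      then have "T powr beta * MU \<ge> T powr beta * (- (1 - p) * G)"
        by (intro mult_left_mono) auto
      moreover have "p + T powr beta * (1 - p) \<le> sg powr alpha"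
        unfolding sg_def using key_chain[OF alpha_bd beta_bd(1) alpha_ge_beta u01 _ up] T1 by simp
      then have "(p + T powr beta * (1 - p)) * G \<le> sg powr alpha * G"
        using Gp by (intro mult_right_mono) auto
      ultimately show "0 \<le> KU + T powr beta * MU + sg powr alpha * G"
        unfolding KUe by (simp add: algebra_simps)
    qed
  qed
  define OT where "OT = objective a b wT (\<lambda>j. sg * wp j)"
  have "(\<Sum>i=1..a. - wT i) = (\<Sum>i=1..a. - kp i + T * (- mp i))"
    by (rule sum.cong) (auto simp: wT_def kp_def mp_def)
  also have "\<dots> = A + T * Om" unfolding A_def Om_def by (simp only: sum.distrib sum_distrib_left)
  finally have OT_eq: "OT = A + T * Om - sg * Og"
    unfolding OT_def objective_def Og_def by (simp add: sum_distrib_left)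
  have OT_le: "OT \<le> Ob" unfolding OT_def using opt[OF feT] .
  have "(T - 1) * O0 + OT = T * Ob" unfolding O0_eq OT_eq O_eq sg_def by (simp add: algebra_simps)
  then have "(T - 1) * O0 \<ge> (T - 1) * Ob" using OT_le by (simp add: algebra_simps)
  then have O0_ge: "O0 \<ge> Ob" using T1 by simp
  have a_pos: "1 \<le> a" using a0 by simp
  have "wm i0 \<le> wm a" using chain_mono[OF wm_ord, of i0 a] i0 unfolding a_def by auto
  moreover have "wm i0 > wmin" using i0 wm_rng unfolding a_def by force
  ultimately have kpa: "kp a = 0" unfolding kp_def by simp
  have "\<exists>i1\<in>{1..a}. wm i1 = wmin"
  proof (rule ccontr)
    assume "\<not> ?thesis"
    then have "A = 0" unfolding A_def kp_def by simp
    moreover have "Og \<ge> 0" unfolding Og_def using wp_nn by (intro sum_nonneg) auto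
    ultimately have "O0 \<le> 0" using O0_eq u01 by (simp add: mult_nonneg_nonneg)
    then show False using O0_ge Opos by simp
  qed
  then obtain i1 where i1: "i1 \<in> {1..a}" "wm i1 = wmin" by blast
  have "i1 \<noteq> a" using i1 kpa price unfolding kp_def by auto
  then obtain m where am: "a = Suc m" and m1: "m \<ge> 1" and i1m: "i1 \<in> {1..m}"
    using i1 by (cases a) auto
  have fe0': "feasible alpha beta lam Wm Wp N wmin (Suc m) b kp (\<lambda>j. u * wp j)" using fe0 am by simp
  define g2 where "g2 = (\<lambda>j. if j = 1 then 0 else u * wp (j - 1))"
  note tr = transfer[OF fe0' m1 kpa[unfolded am], folded g2_def]
  have Lneg: "(\<Sum>i=1..m. h_minus Wm N i * ?U (kp i)) < 0"
  proof (rule sum_neg_of_one[OF _ i1m])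
    show "h_minus Wm N i1 * ?U (kp i1) < 0"
      using hm_p[of i1] i1 U_neg[OF lam_pos, of wmin] price unfolding hm_def kp_def
      by (simp add: mult_pos_neg)
    show "h_minus Wm N j * ?U (kp j) \<le> 0" if "j \<in> {1..m}" for j
      using hm_p[of j] that am kp_rng lam_pos U_nonpos[of lam "kp j"] unfolding hm_def
      by (simp add: mult_nonneg_nonpos)
  qed simp
  obtain v' where v': "feasible alpha beta lam Wm Wp N wmin m (Suc b) kp v'"
      "objective m (Suc b) kp v' > objective m (Suc b) kp g2"
  proof -
    have g21: "g2 1 = 0" unfolding g2_def by simp
    have b1: "1 \<le> Suc b" by simp
    have bN: "Suc b \<le> N" using aN am by simp
    show ?thesis using improve[OF alpha_bd lam_pos Wp_S tr(1) g21 b1 bN Lneg] that by blast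
  qed
  have "objective m (Suc b) kp g2 = O0" using tr(2) am unfolding O0_def by simp
  then have "objective m (Suc b) kp v' > Ob" using v' O0_ge by simp
  moreover have "objective m (Suc b) kp v' \<le> Phi alpha beta lam Wm Wp N wmin m (Suc b)"
    using Phi_ge[OF _ _ v'(1)] m1 by simp
  moreover have "Phi alpha beta lam Wm Wp N wmin m (Suc b) \<le> Phi alpha beta lam Wm Wp N wmin a b"
    using n_opt aN am unfolding a_def b_def by auto
  ultimately show False using PhiO by simp
qed

end
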